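(* Let $S$ be semibounded in $\mathfrak H$ with lower bound $\gamma\in\mathbb R$ and $c\le\gamma$. Let $Q_c$ (into $\mathfrak K_c$) and $Q_c'$ (into $\mathfrak K_c'$) be representing maps for $\mathfrak t(S)-c$, and let $V:\mathfrak K_c\to\mathfrak K_c'$ be a partial isometry with initial space $\overline{\mathrm{ran}}\,Q_c$ and final space $\overline{\mathrm{ran}}\,Q_c'$ such that $Q_c'=VQ_c$. Let $J_c$ and $J_c'$ be the companion relations of $Q_c$ and $Q_c'$. Then $J_c'\,(V\restriction\mathrm{ran}\,Q_c)=J_c$; moreover $S\subset c+J_c'Q_c'=c+J_cQ_c$, where the inclusion is an equality if and only if $\mathrm{ran}\,(S-c)\cap\mathrm{mul}\,S^*=\mathrm{mul}\,S$; and $((J_c')^* )_{\rm reg}=V\,(J_c^* )_{\rm reg}$.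
   Context: Linear relations are linear subspaces $T\subset\mathfrak H\times\mathfrak K$; $\mathrm{dom},\mathrm{ran},\mathrm{mul}\,T=\{g:\{0,g\}\in T\}$; $T^*=\{\{h,k\}:(k,f)=(h,g)\ \forall\{f,g\}\in T\}$; $RT=\{\{f,h\}:\exists g,\{f,g\}\in T,\{g,h\}\in R\}$; $c+T=\{\{f,g+cf\}:\{f,g\}\in T\}$, $S-c=\{\{f,g-cf\}:\{f,g\}\in S\}$. For a closed relation $T$, $T_{\rm reg}=\{\{f,(I-\pi)g\}:\{f,g\}\in T\}$ with $\pi$ the orthogonal projection onto $\mathrm{mul}\,T$. $S$ is semibounded with lower bound $\gamma$ if $\gamma$ is the supremum of all $c$ with $(\varphi',\varphi)\ge c\|\varphi\|^2$ for all $\{\varphi,\varphi'\}\in S$; $\mathfrak t(S)[\varphi,\psi]=(\varphi',\psi)$ on $\mathrm{dom}\,S$. A representing map for $\mathfrak t(S)-c$ is a linear operator $Q_c$ into a Hilbert space with $\mathrm{dom}\,Q_c=\mathrm{dom}\,S$ and $\mathfrak t(S)[\varphi,\psi]=c(\varphi,\psi)+(Q_c\varphi,Q_c\psi)$; its companion relation is $J_c=\{\{Q_c\varphi,\varphi'-c\varphi\}:\{\varphi,\varphi'\}\in S\}$. *)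

theory Defs
  imports "HOL-Analysis.Analysis"
begin

text \<open>A complex Hilbert
space is encoded as its realification (a real Hilbert space, i.e. a complete real inner
product space) together with the multiplication by the imaginary unit, a real-linear
orthogonal map whose square is minus the identity. The real inner product is the real part
of the complex one.\<close>

class complex_hilbert = real_inner + complete_space +
  fixes imult :: "'a \<Rightarrow> 'a"
  assumes imult_add: "imult (x + y) = imult x + imult y"
    and imult_scaleR: "imult (r *\<^sub>R x) = r *\<^sub>R imult x"
    and imult_imult: "imult (imult x) = - x"
    and inner_imult_imult: "inner (imult x) (imult y) = inner x y"

definition cscale :: "complex \<Rightarrow> 'a::complex_hilbert \<Rightarrow> 'a"  (infixr "*\<^sub>C" 75) where
  "a *\<^sub>C x = Re a *\<^sub>R x + Im a *\<^sub>R imult x"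

text \<open>Complex inner product, linear in the first and conjugate linear in the second argument.\<close>
definition cinner :: "'a::complex_hilbert \<Rightarrow> 'a \<Rightarrow> complex" where
  "cinner x y = Complex (inner x y) (inner x (imult y))"

definition clinear :: "('a::complex_hilbert \<Rightarrow> 'b::complex_hilbert) \<Rightarrow> bool" where
  "clinear V \<longleftrightarrow> (\<forall>x y. V (x + y) = V x + V y) \<and> (\<forall>a x. V (a *\<^sub>C x) = a *\<^sub>C V x)"

text \<open>Linear operator with domain D (values outside D are irrelevant).\<close>
definition clinear_on :: "'a::complex_hilbert set \<Rightarrow> ('a \<Rightarrow> 'b::complex_hilbert) \<Rightarrow> bool" where
  "clinear_on D Q \<longleftrightarrow> (\<forall>x\<in>D. \<forall>y\<in>D. Q (x + y) = Q x + Q y) \<and> (\<forall>a. \<forall>x\<in>D. Q (a *\<^sub>C x) = a *\<^sub>C Q x)"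

definition orthogonal_compl :: "'a::complex_hilbert set \<Rightarrow> 'a set" where
  "orthogonal_compl M = {x. \<forall>m\<in>M. cinner x m = 0}"

definition orth_proj :: "'a::complex_hilbert set \<Rightarrow> 'a \<Rightarrow> 'a" where
  "orth_proj M g = (THE p. p \<in> M \<and> (\<forall>m\<in>M. cinner (g - p) m = 0))"

definition partial_isometry :: "('a::complex_hilbert \<Rightarrow> 'b::complex_hilbert) \<Rightarrow> 'a set \<Rightarrow> 'b set \<Rightarrow> bool" where
  "partial_isometry V M N \<longleftrightarrow> clinear V \<and> (\<forall>x\<in>M. norm (V x) = norm x)
     \<and> (\<forall>x\<in>orthogonal_compl M. V x = 0) \<and> V ` M = N"

definition lin_rel :: "('a::complex_hilbert \<times> 'b::complex_hilbert) set \<Rightarrow> bool" where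
  "lin_rel T \<longleftrightarrow> (0, 0) \<in> T \<and> (\<forall>p\<in>T. \<forall>q\<in>T. p + q \<in> T)
     \<and> (\<forall>a. \<forall>(f, g)\<in>T. (a *\<^sub>C f, a *\<^sub>C g) \<in> T)"

definition rdom :: "('a \<times> 'b) set \<Rightarrow> 'a set" where "rdom T = fst ` T"
definition rran :: "('a \<times> 'b) set \<Rightarrow> 'b set" where "rran T = snd ` T"
definition rmul :: "('a::zero \<times> 'b) set \<Rightarrow> 'b set" where "rmul T = {g. (0, g) \<in> T}"

definition radj :: "('a::complex_hilbert \<times> 'b::complex_hilbert) set \<Rightarrow> ('b \<times> 'a) set" where
  "radj T = {(h, k). \<forall>(f, g)\<in>T. cinner k f = cinner h g}"

definition rcomp :: "('b \<times> 'c) set \<Rightarrow> ('a \<times> 'b) set \<Rightarrow> ('a \<times> 'c) set" where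
  "rcomp R T = {(f, h). \<exists>g. (f, g) \<in> T \<and> (g, h) \<in> R}"

definition rplus_const :: "real \<Rightarrow> ('a::real_vector \<times> 'a) set \<Rightarrow> ('a \<times> 'a) set" where
  "rplus_const c T = {(f, g + c *\<^sub>R f) | f g. (f, g) \<in> T}"
definition rminus_const :: "('a::real_vector \<times> 'a) set \<Rightarrow> real \<Rightarrow> ('a \<times> 'a) set" where
  "rminus_const S c = {(f, g - c *\<^sub>R f) | f g. (f, g) \<in> S}"

definition graph_on :: "'a set \<Rightarrow> ('a \<Rightarrow> 'b) \<Rightarrow> ('a \<times> 'b) set" where
  "graph_on D Q = {(x, Q x) | x. x \<in> D}"

definition rreg :: "('a::complex_hilbert \<times> 'b::complex_hilbert) set \<Rightarrow> ('a \<times> 'b) set" where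
  "rreg T = {(f, g - orth_proj (rmul T) g) | f g. (f, g) \<in> T}"

definition lower_bounds_rel :: "('a::complex_hilbert \<times> 'a) set \<Rightarrow> real set" where
  "lower_bounds_rel S = {c. \<forall>(\<phi>, \<phi>')\<in>S. Im (cinner \<phi>' \<phi>) = 0 \<and> c * (norm \<phi>)\<^sup>2 \<le> Re (cinner \<phi>' \<phi>)}"

definition semibounded_lb :: "('a::complex_hilbert \<times> 'a) set \<Rightarrow> real \<Rightarrow> bool" where
  "semibounded_lb S \<gamma> \<longleftrightarrow> lin_rel S \<and> lower_bounds_rel S \<noteq> {} \<and> bdd_above (lower_bounds_rel S)
     \<and> \<gamma> = Sup (lower_bounds_rel S)"

text \<open>Q is a representing map for t(S) - c: a linear operator with domain dom S such that
  t(S)[phi,psi] = c (phi,psi) + (Q phi, Q psi), where t(S)[phi,psi] = (phi',psi).\<close>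
definition representing_map :: "('a::complex_hilbert \<times> 'a) set \<Rightarrow> real \<Rightarrow> ('a \<Rightarrow> 'k::complex_hilbert) \<Rightarrow> bool" where
  "representing_map S c Q \<longleftrightarrow> clinear_on (rdom S) Q \<and>
     (\<forall>(\<phi>, \<phi>')\<in>S. \<forall>\<psi>\<in>rdom S. cinner \<phi>' \<psi> = complex_of_real c * cinner \<phi> \<psi> + cinner (Q \<phi>) (Q \<psi>))"

definition companion :: "('a::complex_hilbert \<times> 'a) set \<Rightarrow> real \<Rightarrow> ('a \<Rightarrow> 'k) \<Rightarrow> ('k \<times> 'a) set" where
  "companion S c Q = {(Q \<phi>, \<phi>' - c *\<^sub>R \<phi>) | \<phi> \<phi>'. (\<phi>, \<phi>') \<in> S}"

end

theory Submission
  imports Defs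
begin


lemma imult_zero[simp]: "imult (0::'a::complex_hilbert) = 0"
  using imult_scaleR[of 0 "0::'a"] by simp

lemma imult_minus: "imult (- (x::'a::complex_hilbert)) = - imult x"
  using imult_scaleR[of "-1" x] by simp

lemma imult_diff: "imult ((x::'a::complex_hilbert) - y) = imult x - imult y"
  by (metis diff_conv_add_uminus imult_add imult_minus)

lemma norm_imult[simp]: "norm (imult (x::'a::complex_hilbert)) = norm x"
  by (simp add: norm_eq_sqrt_inner inner_imult_imult)

lemma bounded_linear_imult: "bounded_linear (imult :: 'a::complex_hilbert \<Rightarrow> 'a)"
  by (rule bounded_linear_intro[where K=1]) (auto simp: imult_add imult_scaleR)

lemma inner_imult_swap: "inner (x::'a::complex_hilbert) (imult y) = - inner (imult x) y"
proof -
  have "inner x (imult y) = inner (imult x) (imult (imult y))" by (simp add: inner_imult_imult)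
  also have "\<dots> = - inner (imult x) y" by (simp add: imult_imult)
  finally show ?thesis .
qed

lemma inner_imult_self: "inner (x::'a::complex_hilbert) (imult x) = 0"
  using inner_imult_swap[of x x] by (metis inner_commute add.inverse_unique add_eq_0_iff_both_eq_0 neg_equal_zero)

lemma cinner_add_left: "cinner ((x::'a::complex_hilbert) + y) z = cinner x z + cinner y z"
  by (simp add: cinner_def inner_add_left complex_eq_iff)
lemma cinner_add_right: "cinner (x::'a::complex_hilbert) (y + z) = cinner x y + cinner x z"
  by (simp add: cinner_def inner_add_right imult_add complex_eq_iff)
lemma cinner_diff_left: "cinner ((x::'a::complex_hilbert) - y) z = cinner x z - cinner y z"
  by (simp add: cinner_def inner_diff_left complex_eq_iff)
lemma cinner_diff_right: "cinner (x::'a::complex_hilbert) (y - z) = cinner x y - cinner x z"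
  by (simp add: cinner_def inner_diff_right imult_diff complex_eq_iff)
lemma cinner_scaleR_left: "cinner (r *\<^sub>R (x::'a::complex_hilbert)) z = complex_of_real r * cinner x z"
  by (simp add: cinner_def complex_eq_iff)
lemma cinner_zero_left[simp]: "cinner (0::'a::complex_hilbert) z = 0"
  by (simp add: cinner_def complex_eq_iff)
lemma cinner_zero_right[simp]: "cinner (z::'a::complex_hilbert) 0 = 0"
  by (simp add: cinner_def complex_eq_iff)
lemma cinner_self: "cinner (x::'a::complex_hilbert) x = complex_of_real ((norm x)\<^sup>2)"
  by (simp add: cinner_def complex_eq_iff inner_imult_self power2_norm_eq_inner)
lemma cinner_self_eq_0: "cinner (x::'a::complex_hilbert) x = 0 \<longleftrightarrow> x = 0"
  by (simp add: cinner_self)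
lemma cinner_commute: "cinner (y::'a::complex_hilbert) x = cnj (cinner x y)"
proof -
  have "inner y (imult x) = - inner x (imult y)"
    by (metis inner_commute inner_imult_swap)
  then show ?thesis by (simp add: cinner_def complex_eq_iff inner_commute)
qed
lemma cinner_eq0_iff: "cinner (x::'a::complex_hilbert) y = 0 \<longleftrightarrow> inner x y = 0 \<and> inner x (imult y) = 0"
  by (simp add: cinner_def complex_eq_iff)

lemma cscale_ii: "\<i> *\<^sub>C (x::'a::complex_hilbert) = imult x"
  by (simp add: cscale_def)
lemma cscale_real: "complex_of_real r *\<^sub>C (x::'a::complex_hilbert) = r *\<^sub>R x"
  by (simp add: cscale_def)

lemma clinear_facts:
  assumes "clinear (V::'a::complex_hilbert \<Rightarrow> 'b::complex_hilbert)"
  shows "V 0 = 0" "V (x + y) = V x + V y" "V (x - y) = V x - V y"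
    "V (imult x) = imult (V x)" "V (r *\<^sub>R x) = r *\<^sub>R V x"
proof -
  have add: "\<And>x y. V (x + y) = V x + V y" using assms by (simp add: clinear_def)
  have sc: "\<And>a x. V (a *\<^sub>C x) = a *\<^sub>C V x" using assms by (simp add: clinear_def)
  show "V 0 = 0" using add[of 0 0] by simp
  show "V (x + y) = V x + V y" by (rule add)
  show "V (x - y) = V x - V y" using add[of "x - y" y] by (simp add: algebra_simps)
  show "V (imult x) = imult (V x)" using sc[of \<i> x] by (simp add: cscale_ii)
  show "V (r *\<^sub>R x) = r *\<^sub>R V x" using sc[of "complex_of_real r" x] by (simp add: cscale_real)
qed



lemma closure_ops:
  fixes A :: "'a::complex_hilbert set"
  assumes add: "\<forall>x\<in>A. \<forall>y\<in>A. x + y \<in> A" and sc: "\<forall>r. \<forall>x\<in>A. r *\<^sub>R x \<in> A"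
    and im: "\<forall>x\<in>A. imult x \<in> A"
    and x: "x \<in> closure A" and y: "y \<in> closure A"
  shows "x + y \<in> closure A" "r *\<^sub>R x \<in> closure A" "imult x \<in> closure A"
proof -
  obtain f where f: "\<forall>n. f n \<in> A" "f \<longlonglongrightarrow> x" using x closure_sequential by blast
  obtain g where g: "\<forall>n. g n \<in> A" "g \<longlonglongrightarrow> y" using y closure_sequential by blast
  show "x + y \<in> closure A" unfolding closure_sequential
    using f g add by (intro exI[of _ "\<lambda>n. f n + g n"]) (auto intro: tendsto_add)
  show "r *\<^sub>R x \<in> closure A" unfolding closure_sequential
    using f sc by (intro exI[of _ "\<lambda>n. r *\<^sub>R f n"]) (auto intro: tendsto_scaleR)
  show "imult x \<in> closure A" unfolding closure_sequential
    using f im bounded_linear.tendsto[OF bounded_linear_imult f(2)]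
    by (intro exI[of _ "\<lambda>n. imult (f n)"]) auto
qed

lemma parallelogram:
  fixes u v :: "'a::real_inner"
  shows "(norm (u + v))\<^sup>2 + (norm (u - v))\<^sup>2 = 2 * (norm u)\<^sup>2 + 2 * (norm v)\<^sup>2"
proof -
  have a: "2 * inner u v = (norm (u + v))\<^sup>2 - (norm u)\<^sup>2 - (norm v)\<^sup>2"
    using dot_norm[of u v] by (simp add: field_simps)
  have b: "2 * inner u v = (norm u)\<^sup>2 + (norm v)\<^sup>2 - (norm (u - v))\<^sup>2"
    using dot_norm_neg[of u v] by (simp add: field_simps)
  show ?thesis using a b by linarith
qed
lemma norm_diff_sq:
  fixes x y :: "'a::real_inner"
  shows "(norm (x - y))\<^sup>2 = (norm x)\<^sup>2 + (norm y)\<^sup>2 - 2 * inner x y"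
proof -
  have b: "2 * inner x y = (norm x)\<^sup>2 + (norm y)\<^sup>2 - (norm (x - y))\<^sup>2"
    using dot_norm_neg[of x y] by (simp add: field_simps)
  show ?thesis using b by linarith
qed

lemma real_proj:
  fixes k :: "'a::{real_inner,complete_space}"
  assumes cl: "closed M" and z: "0 \<in> M" and add: "\<forall>x\<in>M. \<forall>y\<in>M. x + y \<in> M"
    and sc: "\<forall>r. \<forall>x\<in>M. r *\<^sub>R x \<in> M"
  shows "\<exists>m\<in>M. \<forall>y\<in>M. inner (k - m) y = 0"
proof -
  define f where "f y = (norm (k - y))\<^sup>2" for y
  define \<delta> where "\<delta> = Inf (f ` M)"
  have bdd: "bdd_below (f ` M)" unfolding f_def by (rule bdd_belowI[of _ 0]) auto
  have ne: "f ` M \<noteq> {}" using z by auto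
  have low: "\<delta> \<le> f y" if "y \<in> M" for y
    unfolding \<delta>_def using bdd that by (auto intro: cInf_lower)
  have "\<exists>y\<in>M. f y < \<delta> + inverse (real (Suc n))" for n
  proof -
    have "Inf (f ` M) < \<delta> + inverse (real (Suc n))" unfolding \<delta>_def by simp
    then show ?thesis using cInf_lessD[OF ne] by blast
  qed
  then have "\<forall>n. \<exists>y. y \<in> M \<and> f y < \<delta> + inverse (real (Suc n))" by blast
  then obtain y where yy: "\<forall>n. y n \<in> M \<and> f (y n) < \<delta> + inverse (real (Suc n))"
    using choice[of "\<lambda>n y. y \<in> M \<and> f y < \<delta> + inverse (real (Suc n))"] by blast
  then have y: "\<And>n. y n \<in> M" "\<And>n. f (y n) < \<delta> + inverse (real (Suc n))" by auto
  have dist2: "(dist (y n) (y m))\<^sup>2 < 2 * inverse (real (Suc n)) + 2 * inverse (real (Suc m))" for n m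
  proof -
    have mid: "(1/2) *\<^sub>R (y n + y m) \<in> M" using y(1) add sc by blast
    have p: "(norm ((k - y n) + (k - y m)))\<^sup>2 + (norm ((k - y n) - (k - y m)))\<^sup>2
        = 2 * f (y n) + 2 * f (y m)" unfolding f_def by (rule parallelogram)
    have e1: "(k - y n) + (k - y m) = 2 *\<^sub>R (k - (1/2) *\<^sub>R (y n + y m))"
      by (simp add: algebra_simps scaleR_2)
    have e2: "(norm ((k - y n) + (k - y m)))\<^sup>2 = 4 * f ((1/2) *\<^sub>R (y n + y m))"
      unfolding e1 f_def by (simp add: power2_eq_square)
    have e3: "(k - y n) - (k - y m) = y m - y n" by simp
    have "(dist (y n) (y m))\<^sup>2 = 2 * f (y n) + 2 * f (y m) - 4 * f ((1/2) *\<^sub>R (y n + y m))"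
      using p e2 e3 by (simp add: dist_norm norm_minus_commute)
    also have "\<dots> \<le> 2 * f (y n) + 2 * f (y m) - 4 * \<delta>" using low[OF mid] by simp
    also have "\<dots> < 2 * inverse (real (Suc n)) + 2 * inverse (real (Suc m))"
      using y(2)[of n] y(2)[of m] by simp
    finally show ?thesis .
  qed
  have "Cauchy y"
    unfolding Cauchy_def
  proof (intro allI impI)
    fix e :: real assume e: "e > 0"
    then have "e\<^sup>2 / 4 > 0" by simp
    then obtain N :: nat where N: "N > 0" "inverse (real N) < e\<^sup>2 / 4"
      using ex_inverse_of_nat_less by blast
    show "\<exists>M. \<forall>m\<ge>M. \<forall>n\<ge>M. dist (y m) (y n) < e"
    proof (intro exI allI impI)
      fix m n assume mn: "N \<le> m" "N \<le> n"
      have i1: "inverse (real (Suc m)) \<le> inverse (real N)"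
        using mn N by (intro le_imp_inverse_le) auto
      have i2: "inverse (real (Suc n)) \<le> inverse (real N)"
        using mn N by (intro le_imp_inverse_le) auto
      have "(dist (y m) (y n))\<^sup>2 < e\<^sup>2"
        using dist2[of m n] i1 i2 N(2) by linarith
      then show "dist (y m) (y n) < e"
        using e by (simp add: power_less_imp_less_base)
    qed
  qed
  then obtain m where lim: "y \<longlonglongrightarrow> m" using Cauchy_convergent_iff convergent_def by blast
  have mM: "m \<in> M" using cl lim y(1) closed_sequentially by blast
  have flim: "(\<lambda>n. f (y n)) \<longlonglongrightarrow> f m" unfolding f_def
    by (intro tendsto_intros lim)
  have dlim: "(\<lambda>n. \<delta> + inverse (real (Suc n))) \<longlonglongrightarrow> \<delta> + 0"
    by (intro tendsto_intros LIMSEQ_inverse_real_of_nat)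
  have fm: "f m \<le> \<delta>"
  proof -
    have "f m \<le> \<delta> + 0"
      by (rule LIMSEQ_le[OF flim dlim]) (use y(2) less_imp_le in blast)
    then show ?thesis by simp
  qed
  show ?thesis
  proof (intro bexI[OF _ mM] ballI)
    fix z assume zM: "z \<in> M"
    define a where "a = inner (k - m) z"
    define b where "b = (norm z)\<^sup>2"
    define t where "t = a / (b + 1)"
    have b0: "b \<ge> 0" unfolding b_def by simp
    have mz: "m + t *\<^sub>R z \<in> M" using mM zM add sc by blast
    have "f m \<le> f (m + t *\<^sub>R z)" using fm low[OF mz] by linarith
    also have "f (m + t *\<^sub>R z) = f m - 2 * t * a + t\<^sup>2 * b"
    proof -
      have "k - (m + t *\<^sub>R z) = (k - m) - t *\<^sub>R z" by simp
      then have "f (m + t *\<^sub>R z) = (norm (k - m))\<^sup>2 + (norm (t *\<^sub>R z))\<^sup>2 - 2 * inner (k - m) (t *\<^sub>R z)"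
        unfolding f_def by (simp only: norm_diff_sq)
      also have "\<dots> = f m - 2 * t * a + t\<^sup>2 * b"
        unfolding f_def a_def b_def by (simp add: power_mult_distrib)
      finally show ?thesis .
    qed
    finally have h: "2 * t * a \<le> t\<^sup>2 * b" by simp
    have bp: "b + 1 > 0" using b0 by simp
    have "(b+1)\<^sup>2 * (2 * t * a) \<le> (b+1)\<^sup>2 * (t\<^sup>2 * b)" by (rule mult_left_mono[OF h]) simp
    moreover have "(b+1)\<^sup>2 * (2 * t * a) = 2 * a * a * (b + 1)"
      unfolding t_def using bp by (simp add: power2_eq_square)
    moreover have "(b+1)\<^sup>2 * (t\<^sup>2 * b) = a * a * b"
      unfolding t_def using bp by (simp add: power2_eq_square)
    ultimately have "2 * a * a * (b + 1) \<le> a * a * b" by simp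
    then have "a * a * (b + 2) \<le> 0" by (simp add: algebra_simps)
    moreover have "a * a * (b + 2) \<ge> 0" using b0 by simp
    ultimately have "a * a * (b + 2) = 0" by linarith
    then have "a = 0" using b0 by simp
    then show "inner (k - m) z = 0" unfolding a_def .
  qed
qed



lemma cinner_closure_zero:
  fixes A :: "'a::complex_hilbert set"
  assumes n: "n \<in> orthogonal_compl A" and m: "m \<in> closure A"
  shows "cinner n m = 0" "cinner m n = 0"
proof -
  have "A \<subseteq> {x. inner n x = 0} \<inter> {x. inner (imult n) x = 0}"
  proof
    fix a assume "a \<in> A"
    then have "cinner n a = 0" using n by (simp add: orthogonal_compl_def)
    then show "a \<in> {x. inner n x = 0} \<inter> {x. inner (imult n) x = 0}"
      by (simp add: cinner_eq0_iff inner_imult_swap)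
  qed
  moreover have "closed ({x. inner n x = 0} \<inter> {x. inner (imult n) x = 0})"
    by (intro closed_Int closed_hyperplane)
  ultimately have "closure A \<subseteq> {x. inner n x = 0} \<inter> {x. inner (imult n) x = 0}"
    by (rule closure_minimal)
  then have "inner n m = 0" "inner (imult n) m = 0" using m by auto
  then show c: "cinner n m = 0" by (simp add: cinner_eq0_iff inner_imult_swap)
  show "cinner m n = 0" by (subst cinner_commute) (simp add: c)
qed

lemma orthogonal_compl_diff:
  assumes "p \<in> orthogonal_compl A" "q \<in> orthogonal_compl A"
  shows "p - q \<in> orthogonal_compl (A::'a::complex_hilbert set)"
  using assms by (simp add: orthogonal_compl_def cinner_diff_left)

lemma orth_proj_eq:
  fixes A :: "'a::complex_hilbert set"
  assumes m: "m \<in> closure A" and km: "k - m \<in> orthogonal_compl A"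
  shows "orth_proj (orthogonal_compl A) k = k - m"
  unfolding orth_proj_def
proof (rule the_equality)
  show "k - m \<in> orthogonal_compl A \<and> (\<forall>n\<in>orthogonal_compl A. cinner (k - (k - m)) n = 0)"
    using km cinner_closure_zero(2)[OF _ m] by simp
next
  fix p assume p: "p \<in> orthogonal_compl A \<and> (\<forall>n\<in>orthogonal_compl A. cinner (k - p) n = 0)"
  define q where "q = k - m"
  have d: "p - q \<in> orthogonal_compl A" using p km orthogonal_compl_diff unfolding q_def by blast
  have "cinner (p - q) (p - q) = cinner ((k - q) - (k - p)) (p - q)" by (simp add: algebra_simps)
  also have "\<dots> = cinner (k - q) (p - q) - cinner (k - p) (p - q)" by (rule cinner_diff_left)
  also have "cinner (k - q) (p - q) = 0" using cinner_closure_zero(2)[OF d m] by (simp add: q_def)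
  also have "cinner (k - p) (p - q) = 0" using p d by blast
  finally have "p - q = 0" by (simp add: cinner_self_eq_0)
  then show "p = k - m" unfolding q_def by simp
qed

lemma proj_exists:
  fixes A :: "'a::complex_hilbert set"
  assumes z: "0 \<in> A" and add: "\<forall>x\<in>A. \<forall>y\<in>A. x + y \<in> A" and sc: "\<forall>a. \<forall>x\<in>A. a *\<^sub>C x \<in> A"
  shows "\<exists>m\<in>closure A. k - m \<in> orthogonal_compl A"
proof -
  have scR: "\<forall>r. \<forall>x\<in>A. r *\<^sub>R x \<in> A" using sc by (metis cscale_real)
  have im: "\<forall>x\<in>A. imult x \<in> A" using sc by (metis cscale_ii)
  have "\<exists>m\<in>closure A. \<forall>y\<in>closure A. inner (k - m) y = 0"
  proof (rule real_proj)
    show "closed (closure A)" by simp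
    show "0 \<in> closure A" using z closure_subset by blast
    show "\<forall>x\<in>closure A. \<forall>y\<in>closure A. x + y \<in> closure A"
      using closure_ops(1)[OF add scR im] by blast
    show "\<forall>r. \<forall>x\<in>closure A. r *\<^sub>R x \<in> closure A"
      using closure_ops(2)[OF add scR im] by blast
  qed
  then obtain m where m: "m \<in> closure A" "\<forall>y\<in>closure A. inner (k - m) y = 0" by blast
  have "k - m \<in> orthogonal_compl A"
    unfolding orthogonal_compl_def
  proof (intro CollectI ballI)
    fix a assume a: "a \<in> A"
    then have "a \<in> closure A" "imult a \<in> closure A" using im closure_subset by blast+
    then show "cinner (k - m) a = 0" using m(2) by (simp add: cinner_eq0_iff)
  qed
  then show ?thesis using m(1) by blast
qed

lemma orth_proj_self:
  fixes A :: "'a::complex_hilbert set"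
  assumes m: "m \<in> closure A"
  shows "orth_proj (orthogonal_compl A) m = 0"
  using orth_proj_eq[OF m, of m] by (simp add: orthogonal_compl_def)

section \<open>Linear relations\<close>

lemma lin_rel_props:
  assumes "lin_rel S"
  shows "(0, 0) \<in> S"
    and "(a, b) \<in> S \<Longrightarrow> (c, d) \<in> S \<Longrightarrow> (a + c, b + d) \<in> S"
    and "(a, b) \<in> S \<Longrightarrow> (z *\<^sub>C a, z *\<^sub>C b) \<in> S"
    and "(a, b) \<in> S \<Longrightarrow> (r *\<^sub>R a, r *\<^sub>R b) \<in> S"
    and "(a, b) \<in> S \<Longrightarrow> (c, d) \<in> S \<Longrightarrow> (a - c, b - d) \<in> S"
proof -
  show "(0, 0) \<in> S" using assms by (simp add: lin_rel_def)
  show 1: "(a, b) \<in> S \<Longrightarrow> (c, d) \<in> S \<Longrightarrow> (a + c, b + d) \<in> S" for a b c d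
    using assms unfolding lin_rel_def by (metis add_Pair)
  show 2: "(a, b) \<in> S \<Longrightarrow> (z *\<^sub>C a, z *\<^sub>C b) \<in> S" for a b z
    using assms unfolding lin_rel_def by fast
  show 3: "(a, b) \<in> S \<Longrightarrow> (r *\<^sub>R a, r *\<^sub>R b) \<in> S" for a b r
    using 2[of a b "complex_of_real r"] by (simp add: cscale_real)
  show "(a, b) \<in> S \<Longrightarrow> (c, d) \<in> S \<Longrightarrow> (a - c, b - d) \<in> S"
    using 1[of a b "(-1) *\<^sub>R c" "(-1) *\<^sub>R d"] 3[of c d "-1"] by simp
qed

lemma rdom_iff: "x \<in> rdom S \<longleftrightarrow> (\<exists>x'. (x, x') \<in> S)"
  by (force simp: rdom_def)

lemma rdom_props:
  assumes "lin_rel S"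
  shows "0 \<in> rdom S"
    and "x \<in> rdom S \<Longrightarrow> y \<in> rdom S \<Longrightarrow> x + y \<in> rdom S"
    and "x \<in> rdom S \<Longrightarrow> y \<in> rdom S \<Longrightarrow> x - y \<in> rdom S"
    and "x \<in> rdom S \<Longrightarrow> z *\<^sub>C x \<in> rdom S"
  using lin_rel_props[OF assms] unfolding rdom_iff by blast+

context
  fixes S :: "('h::complex_hilbert \<times> 'h) set" and c :: real and Q :: "'h \<Rightarrow> 'k::complex_hilbert"
  assumes lr: "lin_rel S" and rm: "representing_map S c Q"
begin

lemma rm_add: "x \<in> rdom S \<Longrightarrow> y \<in> rdom S \<Longrightarrow> Q (x + y) = Q x + Q y"
  using rm by (simp add: representing_map_def clinear_on_def)

lemma rm_sc: "x \<in> rdom S \<Longrightarrow> Q (z *\<^sub>C x) = z *\<^sub>C Q x"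
  using rm by (simp add: representing_map_def clinear_on_def)

lemma rm_zero: "Q 0 = 0"
  using rm_add[OF rdom_props(1)[OF lr] rdom_props(1)[OF lr]] by simp

lemma rm_diff: "x \<in> rdom S \<Longrightarrow> y \<in> rdom S \<Longrightarrow> Q (x - y) = Q x - Q y"
  using rm_add[OF rdom_props(3)[OF lr], of x y y] by (simp add: algebra_simps)

lemma rm_key: "(\<phi>, \<phi>') \<in> S \<Longrightarrow> \<psi> \<in> rdom S \<Longrightarrow> cinner (\<phi>' - c *\<^sub>R \<phi>) \<psi> = cinner (Q \<phi>) (Q \<psi>)"
  using rm unfolding representing_map_def by (fastforce simp: cinner_diff_left cinner_scaleR_left)

lemma ran_props:
  shows "0 \<in> Q ` rdom S" "\<forall>x\<in>Q ` rdom S. \<forall>y\<in>Q ` rdom S. x + y \<in> Q ` rdom S"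
    "\<forall>a. \<forall>x\<in>Q ` rdom S. a *\<^sub>C x \<in> Q ` rdom S"
proof -
  show "0 \<in> Q ` rdom S" using rm_zero rdom_props(1)[OF lr] by (metis image_eqI)
  show "\<forall>x\<in>Q ` rdom S. \<forall>y\<in>Q ` rdom S. x + y \<in> Q ` rdom S"
    using rm_add rdom_props(2)[OF lr] by (metis (no_types, lifting) image_iff)
  show "\<forall>a. \<forall>x\<in>Q ` rdom S. a *\<^sub>C x \<in> Q ` rdom S"
    using rm_sc rdom_props(4)[OF lr] by (metis (no_types, lifting) image_iff)
qed

lemma radj_comp_iff:
  "(h, k) \<in> radj (companion S c Q) \<longleftrightarrow> (\<forall>(\<phi>, \<phi>')\<in>S. cinner k (Q \<phi>) = cinner h (\<phi>' - c *\<^sub>R \<phi>))"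
  unfolding radj_def companion_def by auto

lemma rmul_radj_comp: "rmul (radj (companion S c Q)) = orthogonal_compl (Q ` rdom S)"
  unfolding rmul_def orthogonal_compl_def radj_comp_iff
  by (auto simp: rdom_iff)

end

lemma two_rm_norm:
  assumes lr: "lin_rel S" and rm: "representing_map S c Q" and rm': "representing_map S c Q'"
    and x: "x \<in> rdom S"
  shows "norm (Q x) = norm (Q' x)"
proof -
  obtain x' where xx: "(x, x') \<in> S" using x unfolding rdom_iff by blast
  have "cinner (Q x) (Q x) = cinner (Q' x) (Q' x)"
    using rm_key[OF lr rm xx x] rm_key[OF lr rm' xx x] by (rule trans[OF sym])
  then have "complex_of_real ((norm (Q x))\<^sup>2) = complex_of_real ((norm (Q' x))\<^sup>2)"
    by (simp only: cinner_self)
  then have "(norm (Q x))\<^sup>2 = (norm (Q' x))\<^sup>2" by (rule of_real_eq_iff[THEN iffD1])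
  then show ?thesis using power2_eq_iff_nonneg[of "norm (Q x)" "norm (Q' x)"] by simp
qed

lemma two_rm_eq:
  assumes lr: "lin_rel S" and rm: "representing_map S c Q" and rm': "representing_map S c Q'"
    and x: "x \<in> rdom S" and y: "y \<in> rdom S"
  shows "Q x = Q y \<longleftrightarrow> Q' x = Q' y"
proof -
  have "x - y \<in> rdom S" using rdom_props(3)[OF lr x y] .
  then have "norm (Q (x - y)) = norm (Q' (x - y))" by (rule two_rm_norm[OF lr rm rm'])
  moreover have "Q x = Q y \<longleftrightarrow> norm (Q (x - y)) = 0" using rm_diff[OF lr rm x y] by simp
  moreover have "Q' x = Q' y \<longleftrightarrow> norm (Q' (x - y)) = 0" using rm_diff[OF lr rm' x y] by simp
  ultimately show ?thesis by simp
qed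

lemma iso_cinner:
  fixes V :: "'a::complex_hilbert \<Rightarrow> 'b::complex_hilbert"
  assumes lin: "clinear V" and iso: "\<forall>x\<in>M. norm (V x) = norm x"
    and add: "\<forall>x\<in>M. \<forall>y\<in>M. x + y \<in> M" and im: "\<forall>x\<in>M. imult x \<in> M"
    and x: "x \<in> M" and y: "y \<in> M"
  shows "cinner (V x) (V y) = cinner x y"
proof -
  have ri: "inner (V u) (V w) = inner u w" if u: "u \<in> M" and w: "w \<in> M" for u w
  proof -
    have "inner (V u) (V w) = ((norm (V u + V w))\<^sup>2 - (norm (V u))\<^sup>2 - (norm (V w))\<^sup>2) / 2"
      by (rule dot_norm)
    also have "V u + V w = V (u + w)" using clinear_facts(2)[OF lin] by simp
    also have "((norm (V (u + w)))\<^sup>2 - (norm (V u))\<^sup>2 - (norm (V w))\<^sup>2) / 2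
        = ((norm (u + w))\<^sup>2 - (norm u)\<^sup>2 - (norm w)\<^sup>2) / 2"
      using iso u w add by simp
    also have "\<dots> = inner u w" by (rule dot_norm[symmetric])
    finally show ?thesis .
  qed
  have "inner (V x) (imult (V y)) = inner x (imult y)"
    using ri[OF x im[rule_format, OF y]] clinear_facts(4)[OF lin] by simp
  then show ?thesis using ri[OF x y] by (simp add: cinner_def)
qed



lemma mem_rcomp: "(f, h) \<in> rcomp R T \<longleftrightarrow> (\<exists>g. (f, g) \<in> T \<and> (g, h) \<in> R)"
  by (simp add: rcomp_def)
lemma mem_graph: "(x, y) \<in> graph_on D Q \<longleftrightarrow> x \<in> D \<and> y = Q x"
  by (auto simp: graph_on_def)
lemma mem_companion: "(a, b) \<in> companion S c Q \<longleftrightarrow> (\<exists>\<phi> \<phi>'. (\<phi>, \<phi>') \<in> S \<and> a = Q \<phi> \<and> b = \<phi>' - c *\<^sub>R \<phi>)"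
  by (auto simp: companion_def)
lemma mem_rplus: "(f, g) \<in> rplus_const c T \<longleftrightarrow> (f, g - c *\<^sub>R f) \<in> T"
  by (force simp: rplus_const_def)
lemma mem_rran_rminus: "x \<in> rran (rminus_const S c) \<longleftrightarrow> (\<exists>f g. (f, g) \<in> S \<and> x = g - c *\<^sub>R f)"
  by (force simp: rran_def rminus_const_def)
lemma mem_rmul: "x \<in> rmul T \<longleftrightarrow> (0, x) \<in> T"
  by (simp add: rmul_def)
lemma mem_radj0: "(0, k) \<in> radj S \<longleftrightarrow> (\<forall>(f, g)\<in>S. cinner k f = 0)"
  by (simp add: radj_def)
lemma mem_rreg: "(f, g') \<in> rreg T \<longleftrightarrow> (\<exists>g. (f, g) \<in> T \<and> g' = g - orth_proj (rmul T) g)"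
  by (auto simp: rreg_def)

lemma mem_JQ:
  "(\<psi>, h) \<in> rcomp (companion S c Q) (graph_on (rdom S) Q) \<longleftrightarrow>
    \<psi> \<in> rdom S \<and> (\<exists>\<phi> \<phi>'. (\<phi>, \<phi>') \<in> S \<and> Q \<phi> = Q \<psi> \<and> h = \<phi>' - c *\<^sub>R \<phi>)"
  unfolding mem_rcomp mem_graph mem_companion by metis



lemma partA:
  assumes lr: "lin_rel S" and rmQ: "representing_map S c Q" and rmQ': "representing_map S c Q'"
    and hV: "\<forall>\<phi>\<in>rdom S. Q' \<phi> = V (Q \<phi>)"
  shows "rcomp (companion S c Q') (graph_on (Q ` rdom S) V) = companion S c Q" (is "?L = ?R")
proof -
  have "(a, b) \<in> ?L \<longleftrightarrow> (a, b) \<in> ?R" for a b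
  proof
    assume "(a, b) \<in> rcomp (companion S c Q') (graph_on (Q ` rdom S) V)"
    then obtain g where g: "(a, g) \<in> graph_on (Q ` rdom S) V" "(g, b) \<in> companion S c Q'"
      unfolding mem_rcomp by blast
    from g(1) obtain \<psi> where \<psi>: "\<psi> \<in> rdom S" "a = Q \<psi>" "g = V a"
      unfolding mem_graph by blast
    from g(2) obtain \<phi> \<phi>' where \<phi>: "(\<phi>, \<phi>') \<in> S" "g = Q' \<phi>" "b = \<phi>' - c *\<^sub>R \<phi>"
      unfolding mem_companion by blast
    have \<phi>D: "\<phi> \<in> rdom S" using \<phi>(1) by (auto simp: rdom_iff)
    have "Q' \<phi> = Q' \<psi>" using hV \<psi> \<phi> by simp
    then have "Q \<phi> = Q \<psi>" using two_rm_eq[OF lr rmQ rmQ' \<phi>D \<psi>(1)] by simp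
    then show "(a, b) \<in> companion S c Q" unfolding mem_companion using \<phi> \<psi> by metis
  next
    assume "(a, b) \<in> companion S c Q"
    then obtain \<phi> \<phi>' where \<phi>: "(\<phi>, \<phi>') \<in> S" "a = Q \<phi>" "b = \<phi>' - c *\<^sub>R \<phi>"
      unfolding mem_companion by blast
    have \<phi>D: "\<phi> \<in> rdom S" using \<phi>(1) by (auto simp: rdom_iff)
    have "(a, Q' \<phi>) \<in> graph_on (Q ` rdom S) V" unfolding mem_graph using \<phi>D \<phi>(2) hV by simp
    moreover have "(Q' \<phi>, b) \<in> companion S c Q'" unfolding mem_companion using \<phi> by blast
    ultimately show "(a, b) \<in> rcomp (companion S c Q') (graph_on (Q ` rdom S) V)"
      unfolding mem_rcomp by blast
  qed
  then show ?thesis by (intro subset_antisym subrelI) auto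
qed

lemma partB:
  shows "S \<subseteq> rplus_const c (rcomp (companion S c Q) (graph_on (rdom S) Q))"
proof
  fix p assume pS: "p \<in> S"
  obtain f g where p: "p = (f, g)" by (cases p)
  have fD: "f \<in> rdom S" using pS p by (auto simp: rdom_iff)
  show "p \<in> rplus_const c (rcomp (companion S c Q) (graph_on (rdom S) Q))"
    unfolding p mem_rplus mem_JQ using fD pS p by blast
qed

lemma partC:
  assumes lr: "lin_rel S" and rmQ: "representing_map S c Q" and rmQ': "representing_map S c Q'"
  shows "rcomp (companion S c Q') (graph_on (rdom S) Q') = rcomp (companion S c Q) (graph_on (rdom S) Q)"
proof -
  have *: "(a, b) \<in> rcomp (companion S c Q') (graph_on (rdom S) Q') \<longleftrightarrow>
      (a, b) \<in> rcomp (companion S c Q) (graph_on (rdom S) Q)" for a b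
  proof -
  have "Q' \<phi> = Q' a \<longleftrightarrow> Q \<phi> = Q a" if "(\<phi>, \<phi>') \<in> S" "a \<in> rdom S" for \<phi> \<phi>'
  proof -
    have pD: "\<phi> \<in> rdom S" using that(1) by (auto simp: rdom_iff)
    show ?thesis using two_rm_eq[OF lr rmQ rmQ' pD that(2)] by simp
  qed
  then show ?thesis unfolding mem_JQ by blast
  qed
  show ?thesis using * by (intro subset_antisym subrelI) auto
qed

lemma mulstar_iff:
  assumes lr: "lin_rel S" and rm: "representing_map S c Q" and \<xi>: "(\<xi>, \<xi>') \<in> S"
  shows "\<xi>' - c *\<^sub>R \<xi> \<in> rmul (radj S) \<longleftrightarrow> Q \<xi> = 0"
proof
  assume "\<xi>' - c *\<^sub>R \<xi> \<in> rmul (radj S)"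
  then have "\<forall>(f, g)\<in>S. cinner (\<xi>' - c *\<^sub>R \<xi>) f = 0" unfolding mem_rmul mem_radj0 .
  then have "cinner (\<xi>' - c *\<^sub>R \<xi>) \<xi> = 0" using \<xi> by blast
  moreover have "\<xi> \<in> rdom S" using \<xi> by (auto simp: rdom_iff)
  ultimately have "cinner (Q \<xi>) (Q \<xi>) = 0" using rm_key[OF lr rm \<xi>] by simp
  then show "Q \<xi> = 0" by (simp add: cinner_self_eq_0)
next
  assume q: "Q \<xi> = 0"
  have "cinner (\<xi>' - c *\<^sub>R \<xi>) f = 0" if "(f, g) \<in> S" for f g
  proof -
    have "f \<in> rdom S" using that by (auto simp: rdom_iff)
    then show ?thesis using rm_key[OF lr rm \<xi>] q by simp
  qed
  then show "\<xi>' - c *\<^sub>R \<xi> \<in> rmul (radj S)" unfolding mem_rmul mem_radj0 by blast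
qed

lemma partD:
  assumes lr: "lin_rel S" and rm: "representing_map S c Q"
  shows "S = rplus_const c (rcomp (companion S c Q) (graph_on (rdom S) Q))
     \<longleftrightarrow> rran (rminus_const S c) \<inter> rmul (radj S) = rmul S"
proof -
  let ?T = "rplus_const c (rcomp (companion S c Q) (graph_on (rdom S) Q))"
  have z: "(0, 0) \<in> S" by (rule lin_rel_props(1)[OF lr])
  have zD: "0 \<in> rdom S" by (rule rdom_props(1)[OF lr])
  have Q0: "Q 0 = 0" by (rule rm_zero[OF lr rm])
  have mulsub: "rmul S \<subseteq> rran (rminus_const S c) \<inter> rmul (radj S)"
  proof
    fix k assume "k \<in> rmul S"
    then have k: "(0, k) \<in> S" by (simp add: mem_rmul)
    have "k \<in> rran (rminus_const S c)" unfolding mem_rran_rminus using k by force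
    moreover have "k - c *\<^sub>R 0 \<in> rmul (radj S)" using mulstar_iff[OF lr rm k] Q0 by simp
    ultimately show "k \<in> rran (rminus_const S c) \<inter> rmul (radj S)" by simp
  qed
  show ?thesis
  proof
    assume ST: "S = ?T"
    have "rran (rminus_const S c) \<inter> rmul (radj S) \<subseteq> rmul S"
    proof
      fix x assume x: "x \<in> rran (rminus_const S c) \<inter> rmul (radj S)"
      then have "x \<in> rran (rminus_const S c)" by simp
      then obtain f g where fg: "(f, g) \<in> S" "x = g - c *\<^sub>R f" unfolding mem_rran_rminus by blast
      have "Q f = 0" using mulstar_iff[OF lr rm fg(1)] x fg(2) by simp
      then have "(0, x - c *\<^sub>R 0) \<in> rcomp (companion S c Q) (graph_on (rdom S) Q)"
        unfolding mem_JQ using zD fg Q0 by auto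
      then have "(0, x) \<in> ?T" unfolding mem_rplus by simp
      then show "x \<in> rmul S" using ST by (simp add: mem_rmul)
    qed
    then show "rran (rminus_const S c) \<inter> rmul (radj S) = rmul S" using mulsub by blast
  next
    assume eq: "rran (rminus_const S c) \<inter> rmul (radj S) = rmul S"
    have "?T \<subseteq> S"
    proof
      fix p assume pT: "p \<in> ?T"
      obtain \<psi> h where p: "p = (\<psi>, h)" by (cases p)
      from pT obtain \<phi> \<phi>' where \<psi>D: "\<psi> \<in> rdom S" and \<phi>: "(\<phi>, \<phi>') \<in> S" "Q \<phi> = Q \<psi>"
          "h - c *\<^sub>R \<psi> = \<phi>' - c *\<^sub>R \<phi>"
        unfolding p mem_rplus mem_JQ by blast
      obtain \<psi>' where \<psi>': "(\<psi>, \<psi>') \<in> S" using \<psi>D by (auto simp: rdom_iff)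
      have \<xi>: "(\<phi> - \<psi>, \<phi>' - \<psi>') \<in> S" by (rule lin_rel_props(5)[OF lr \<phi>(1) \<psi>'])
      have \<phi>D: "\<phi> \<in> rdom S" using \<phi>(1) by (auto simp: rdom_iff)
      have "Q (\<phi> - \<psi>) = 0" using rm_diff[OF lr rm \<phi>D \<psi>D] \<phi>(2) by simp
      then have m1: "(\<phi>' - \<psi>') - c *\<^sub>R (\<phi> - \<psi>) \<in> rmul (radj S)" using mulstar_iff[OF lr rm \<xi>] by simp
      have m2: "(\<phi>' - \<psi>') - c *\<^sub>R (\<phi> - \<psi>) \<in> rran (rminus_const S c)"
        unfolding mem_rran_rminus using \<xi> by blast
      have "(\<phi>' - \<psi>') - c *\<^sub>R (\<phi> - \<psi>) \<in> rmul S" using m1 m2 eq by blast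
      then have "(0, (\<phi>' - \<psi>') - c *\<^sub>R (\<phi> - \<psi>)) \<in> S" by (simp add: mem_rmul)
      from lin_rel_props(2)[OF lr \<psi>' this]
      have "(\<psi>, \<psi>' + ((\<phi>' - \<psi>') - c *\<^sub>R (\<phi> - \<psi>))) \<in> S" by simp
      moreover have "\<psi>' + ((\<phi>' - \<psi>') - c *\<^sub>R (\<phi> - \<psi>)) = h"
        using \<phi>(3) by (simp add: algebra_simps scaleR_diff_right)
      ultimately show "p \<in> S" using p by simp
    qed
    then show "S = ?T" using partB by blast
  qed
qed



lemma ran_closed_ops:
  assumes lr: "lin_rel S" and rm: "representing_map S c Q"
  shows "\<forall>x\<in>Q ` rdom S. \<forall>y\<in>Q ` rdom S. x + y \<in> Q ` rdom S"
    "\<forall>r. \<forall>x\<in>Q ` rdom S. r *\<^sub>R x \<in> Q ` rdom S"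
    "\<forall>x\<in>Q ` rdom S. imult x \<in> Q ` rdom S"
proof -
  note rp = ran_props[OF lr rm]
  show "\<forall>x\<in>Q ` rdom S. \<forall>y\<in>Q ` rdom S. x + y \<in> Q ` rdom S" by (rule rp(2))
  show "\<forall>r. \<forall>x\<in>Q ` rdom S. r *\<^sub>R x \<in> Q ` rdom S"
  proof (intro allI ballI)
    fix r x assume "x \<in> Q ` rdom S"
    then have "complex_of_real r *\<^sub>C x \<in> Q ` rdom S" using rp(3) by blast
    then show "r *\<^sub>R x \<in> Q ` rdom S" by (simp add: cscale_real)
  qed
  show "\<forall>x\<in>Q ` rdom S. imult x \<in> Q ` rdom S"
  proof
    fix x assume "x \<in> Q ` rdom S"
    then have "\<i> *\<^sub>C x \<in> Q ` rdom S" using rp(3) by blast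
    then show "imult x \<in> Q ` rdom S" by (simp add: cscale_ii)
  qed
qed

lemma partE:
  fixes S :: "('h::complex_hilbert \<times> 'h) set"
    and Q :: "'h \<Rightarrow> 'k::complex_hilbert"
    and Q' :: "'h \<Rightarrow> 'l::complex_hilbert"
    and V :: "'k \<Rightarrow> 'l"
  assumes lr: "lin_rel S" and rmQ: "representing_map S c Q" and rmQ': "representing_map S c Q'"
    and PI: "partial_isometry V (closure (Q ` rdom S)) (closure (Q' ` rdom S))"
    and hV: "\<forall>\<phi>\<in>rdom S. Q' \<phi> = V (Q \<phi>)"
  shows "rreg (radj (companion S c Q')) = rcomp (graph_on UNIV V) (rreg (radj (companion S c Q)))"
    (is "?L = ?R")
proof -
  let ?A = "Q ` rdom S" and ?A' = "Q' ` rdom S"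
  let ?M = "closure ?A" and ?M' = "closure ?A'"
  have PI': "clinear V \<and> (\<forall>x\<in>?M. norm (V x) = norm x)
     \<and> (\<forall>x\<in>orthogonal_compl ?M. V x = 0) \<and> V ` ?M = ?M'"
    using PI unfolding partial_isometry_def .
  have lin: "clinear V" using PI' by (rule conjunct1)
  have iso: "\<forall>x\<in>?M. norm (V x) = norm x" by (rule PI'[THEN conjunct2, THEN conjunct1])
  have VM: "V ` ?M = ?M'" by (rule PI'[THEN conjunct2, THEN conjunct2, THEN conjunct2])
  note ops = ran_closed_ops[OF lr rmQ]
  have Madd: "\<forall>x\<in>?M. \<forall>y\<in>?M. x + y \<in> ?M"
  proof (intro ballI)
    fix x y assume x: "x \<in> ?M" and y: "y \<in> ?M"
    show "x + y \<in> ?M" by (rule closure_ops(1)[OF ops(1) ops(2) ops(3) x y])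
  qed
  have Mim: "\<forall>x\<in>?M. imult x \<in> ?M"
  proof
    fix x assume x: "x \<in> ?M"
    show "imult x \<in> ?M" by (rule closure_ops(3)[OF ops(1) ops(2) ops(3) x x])
  qed
  note rpQ = ran_props[OF lr rmQ] and rpQ' = ran_props[OF lr rmQ']
  have mulJ: "rmul (radj (companion S c Q)) = orthogonal_compl ?A" by (rule rmul_radj_comp[OF lr rmQ])
  have mulJ': "rmul (radj (companion S c Q')) = orthogonal_compl ?A'" by (rule rmul_radj_comp[OF lr rmQ'])
  have pres: "cinner (V m) (Q' \<phi>) = cinner m (Q \<phi>)" if m: "m \<in> ?M" and \<phi>: "\<phi> \<in> rdom S" for m \<phi>
  proof -
    have "Q \<phi> \<in> ?M" using \<phi> by (intro closure_subset[THEN subsetD] imageI)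
    then have "cinner (V m) (V (Q \<phi>)) = cinner m (Q \<phi>)"
      by (rule iso_cinner[OF lin iso Madd Mim m])
    then show ?thesis using hV \<phi> by simp
  qed
  have orthA: "cinner k a = cinner m a" if "k - m \<in> orthogonal_compl B" "a \<in> B"
    for k m a and B :: "'z::complex_hilbert set"
  proof -
    have "cinner (k - m) a = 0" using that by (simp add: orthogonal_compl_def)
    then show ?thesis by (simp add: cinner_diff_left)
  qed
  have key: "(h, w) \<in> ?L \<longleftrightarrow> (h, w) \<in> ?R" for h w
  proof
    assume "(h, w) \<in> ?L"
    then obtain k' where k': "(h, k') \<in> radj (companion S c Q')"
      "w = k' - orth_proj (orthogonal_compl ?A') k'"
      unfolding mem_rreg mulJ' by blast
    obtain m' where m': "m' \<in> ?M'" "k' - m' \<in> orthogonal_compl ?A'"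
      using proj_exists[OF rpQ'(1) rpQ'(2) rpQ'(3)] by blast
    have w: "w = m'" using k'(2) orth_proj_eq[OF m'] by simp
    have "m' \<in> V ` ?M" using m'(1) by (simp only: VM)
    then obtain m where m: "m \<in> ?M" "V m = m'" by (rule imageE) (rule that, assumption, rule sym)
    have "(h, m) \<in> radj (companion S c Q)"
      unfolding radj_comp_iff[OF lr rmQ]
    proof (intro ballI, clarify)
      fix \<phi> \<phi>' assume \<phi>: "(\<phi>, \<phi>') \<in> S"
      then have \<phi>D: "\<phi> \<in> rdom S" by (auto simp: rdom_iff)
      have "cinner m (Q \<phi>) = cinner m' (Q' \<phi>)" using pres[OF m(1) \<phi>D] m(2) by simp
      also have "\<dots> = cinner k' (Q' \<phi>)" using orthA[OF m'(2)] \<phi>D by simp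
      also have "\<dots> = cinner h (\<phi>' - c *\<^sub>R \<phi>)" using k'(1) \<phi> unfolding radj_comp_iff[OF lr rmQ'] by blast
      finally show "cinner m (Q \<phi>) = cinner h (\<phi>' - c *\<^sub>R \<phi>)" .
    qed
    moreover have "m = m - orth_proj (orthogonal_compl ?A) m" using orth_proj_self[OF m(1)] by simp
    ultimately have "(h, m) \<in> rreg (radj (companion S c Q))" unfolding mem_rreg mulJ by blast
    moreover have "(m, w) \<in> graph_on UNIV V" unfolding mem_graph using w m(2) by simp
    ultimately show "(h, w) \<in> ?R" unfolding mem_rcomp by blast
  next
    assume "(h, w) \<in> ?R"
    then obtain g where g: "(h, g) \<in> rreg (radj (companion S c Q))" "w = V g"
      unfolding mem_rcomp mem_graph by blast
    then obtain k where k: "(h, k) \<in> radj (companion S c Q)"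
      "g = k - orth_proj (orthogonal_compl ?A) k"
      unfolding mem_rreg mulJ by blast
    obtain m where m: "m \<in> ?M" "k - m \<in> orthogonal_compl ?A"
      using proj_exists[OF rpQ(1) rpQ(2) rpQ(3)] by blast
    have gm: "g = m" using k(2) orth_proj_eq[OF m] by simp
    have "V m \<in> V ` ?M" using m(1) by (rule imageI)
    then have VmM: "V m \<in> ?M'" by (simp only: VM)
    have "(h, V m) \<in> radj (companion S c Q')"
      unfolding radj_comp_iff[OF lr rmQ']
    proof (intro ballI, clarify)
      fix \<phi> \<phi>' assume \<phi>: "(\<phi>, \<phi>') \<in> S"
      then have \<phi>D: "\<phi> \<in> rdom S" by (auto simp: rdom_iff)
      have "cinner (V m) (Q' \<phi>) = cinner m (Q \<phi>)" by (rule pres[OF m(1) \<phi>D])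
      also have "\<dots> = cinner k (Q \<phi>)" using orthA[OF m(2)] \<phi>D by simp
      also have "\<dots> = cinner h (\<phi>' - c *\<^sub>R \<phi>)" using k(1) \<phi> unfolding radj_comp_iff[OF lr rmQ] by blast
      finally show "cinner (V m) (Q' \<phi>) = cinner h (\<phi>' - c *\<^sub>R \<phi>)" .
    qed
    moreover have "V m = V m - orth_proj (orthogonal_compl ?A') (V m)" using orth_proj_self[OF VmM] by simp
    ultimately have "(h, V m) \<in> ?L" unfolding mem_rreg mulJ' by blast
    then show "(h, w) \<in> ?L" using g(2) gm by simp
  qed
  show ?thesis
  proof (intro subset_antisym subrelI)
    fix x y assume "(x, y) \<in> ?L" then show "(x, y) \<in> ?R" by (rule key[THEN iffD1])
  next
    fix x y assume "(x, y) \<in> ?R" then show "(x, y) \<in> ?L" by (rule key[THEN iffD2])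
  qed
qed

theorem lemma3p2:
  fixes S :: "('h::complex_hilbert \<times> 'h) set"
    and \<gamma> c :: real
    and Q :: "'h \<Rightarrow> 'k::complex_hilbert"
    and Q' :: "'h \<Rightarrow> 'l::complex_hilbert"
    and V :: "'k \<Rightarrow> 'l"
  assumes "semibounded_lb S \<gamma>"
    and "c \<le> \<gamma>"
    and "representing_map S c Q"
    and "representing_map S c Q'"
    and "partial_isometry V (closure (Q ` rdom S)) (closure (Q' ` rdom S))"
    and "\<forall>\<phi>\<in>rdom S. Q' \<phi> = V (Q \<phi>)"
  shows "rcomp (companion S c Q') (graph_on (Q ` rdom S) V) = companion S c Q
    \<and> S \<subseteq> rplus_const c (rcomp (companion S c Q') (graph_on (rdom S) Q'))
    \<and> rplus_const c (rcomp (companion S c Q') (graph_on (rdom S) Q'))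
          = rplus_const c (rcomp (companion S c Q) (graph_on (rdom S) Q))
    \<and> (S = rplus_const c (rcomp (companion S c Q') (graph_on (rdom S) Q'))
          \<longleftrightarrow> rran (rminus_const S c) \<inter> rmul (radj S) = rmul S)
    \<and> rreg (radj (companion S c Q')) = rcomp (graph_on UNIV V) (rreg (radj (companion S c Q)))"
proof -
  have lr: "lin_rel S" using assms(1) by (simp add: semibounded_lb_def)
  have A: "rcomp (companion S c Q') (graph_on (Q ` rdom S) V) = companion S c Q"
    by (rule partA[OF lr assms(3) assms(4) assms(6)])
  have B: "S \<subseteq> rplus_const c (rcomp (companion S c Q') (graph_on (rdom S) Q'))"
    by (rule partB)
  have C: "rplus_const c (rcomp (companion S c Q') (graph_on (rdom S) Q'))
          = rplus_const c (rcomp (companion S c Q) (graph_on (rdom S) Q))"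
    by (simp only: partC[OF lr assms(3) assms(4)])
  have D: "S = rplus_const c (rcomp (companion S c Q') (graph_on (rdom S) Q'))
          \<longleftrightarrow> rran (rminus_const S c) \<inter> rmul (radj S) = rmul S"
    by (rule partD[OF lr assms(4)])
  have E: "rreg (radj (companion S c Q')) = rcomp (graph_on UNIV V) (rreg (radj (companion S c Q)))"
    by (rule partE[OF lr assms(3) assms(4) assms(5) assms(6)])
  show ?thesis by (intro conjI A B C D E)
qed


end
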